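(* Let $\mathcal{L}$ be a set closed under a binary connective $\wedge$ and a unary connective $\neg$, and let $\langle \mathcal{M}, \models, f\rangle$ be a restricted fC-model for $\mathcal{L}$ that behaves classically with respect to $\wedge$ and $\neg$, i.e. for every $m \in \mathcal{M}$ and $a, b \in \mathcal{L}$: $m \models a\wedge b$ iff ($m \models a$ and $m \models b$), and $m \models \neg a$ iff $m \not\models a$. Let $\mathcal{C}(A) = \overline{f(\widehat{A})}$ for $A \subseteq \mathcal{L}$. Then for all $A \subseteq \mathcal{L}$ and $a, b \in \mathcal{L}$: ($\wedge$-R) $\mathcal{C}(A \cup \{a\wedge b\}) = \mathcal{C}(A \cup \{a, b\})$; ($\neg$-R1) $\mathcal{C}(A \cup \{a, \neg a\}) = \mathcal{L}$; ($\neg$-R2) if $\mathcal{C}(A \cup \{\neg a\}) = \mathcal{L}$ then $a \in \mathcal{C}(A)$.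
   Context: An fC-model for $\mathcal{L}$ is a triple $\langle \mathcal{M}, \models, f\rangle$ where $\mathcal{M}$ is any set, $\models \subseteq \mathcal{M}\times\mathcal{L}$ is a binary relation, and $f: 2^{\mathcal{M}} \to 2^{\mathcal{M}}$ is defined on all subsets of $\mathcal{M}$ and satisfies, for all $X, Y \subseteq \mathcal{M}$: Contraction $f(X) \subseteq X$, and Local Cumulativity $f(X) \subseteq Y \subseteq X \Rightarrow f(Y) = f(X)$. It is restricted if also $f(X) = \emptyset \Rightarrow X = \emptyset$. For $A \subseteq \mathcal{L}$, $\widehat{A} = \{x \in \mathcal{M} : x \models a\ \forall a \in A\}$; for $X \subseteq \mathcal{M}$, $\overline{X} = \{a \in \mathcal{L} : x \models a\ \forall x \in X\}$. *)

theory Defs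
  imports Main
begin

definition fC_model :: "'m set \<Rightarrow> 'l set \<Rightarrow> ('m \<Rightarrow> 'l \<Rightarrow> bool) \<Rightarrow> ('m set \<Rightarrow> 'm set) \<Rightarrow> bool" where
  "fC_model M L sat f \<longleftrightarrow>
     (\<forall>X. X \<subseteq> M \<longrightarrow> f X \<subseteq> X) \<and>
     (\<forall>X Y. X \<subseteq> M \<longrightarrow> Y \<subseteq> M \<longrightarrow> f X \<subseteq> Y \<longrightarrow> Y \<subseteq> X \<longrightarrow> f Y = f X)"

definition restricted_fC_model :: "'m set \<Rightarrow> 'l set \<Rightarrow> ('m \<Rightarrow> 'l \<Rightarrow> bool) \<Rightarrow> ('m set \<Rightarrow> 'm set) \<Rightarrow> bool" where
  "restricted_fC_model M L sat f \<longleftrightarrow>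
     fC_model M L sat f \<and> (\<forall>X. X \<subseteq> M \<longrightarrow> f X = {} \<longrightarrow> X = {})"

text \<open>The hat operator: models of all formulas in A.\<close>
definition mods :: "'m set \<Rightarrow> ('m \<Rightarrow> 'l \<Rightarrow> bool) \<Rightarrow> 'l set \<Rightarrow> 'm set" where
  "mods M sat A = {x \<in> M. \<forall>a\<in>A. sat x a}"

text \<open>The overline operator: formulas satisfied by all models in X.\<close>
definition theo :: "'l set \<Rightarrow> ('m \<Rightarrow> 'l \<Rightarrow> bool) \<Rightarrow> 'm set \<Rightarrow> 'l set" where
  "theo L sat X = {a \<in> L. \<forall>x\<in>X. sat x a}"

definition Cn :: "'m set \<Rightarrow> 'l set \<Rightarrow> ('m \<Rightarrow> 'l \<Rightarrow> bool) \<Rightarrow> ('m set \<Rightarrow> 'm set) \<Rightarrow> 'l set \<Rightarrow> 'l set" where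
  "Cn M L sat f A = theo L sat (f (mods M sat A))"

end

theory Submission
  imports Defs
begin

theorem theorem3:
  fixes M :: "'m set" and L :: "'l set" and sat :: "'m \<Rightarrow> 'l \<Rightarrow> bool"
    and f :: "'m set \<Rightarrow> 'm set" and conj :: "'l \<Rightarrow> 'l \<Rightarrow> 'l" and neg :: "'l \<Rightarrow> 'l"
  assumes closed_conj: "\<And>a b. a \<in> L \<Longrightarrow> b \<in> L \<Longrightarrow> conj a b \<in> L"
    and closed_neg: "\<And>a. a \<in> L \<Longrightarrow> neg a \<in> L"
    and model: "restricted_fC_model M L sat f"
    and sat_conj: "\<And>m a b. m \<in> M \<Longrightarrow> a \<in> L \<Longrightarrow> b \<in> L \<Longrightarrow> sat m (conj a b) \<longleftrightarrow> sat m a \<and> sat m b"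
    and sat_neg: "\<And>m a. m \<in> M \<Longrightarrow> a \<in> L \<Longrightarrow> sat m (neg a) \<longleftrightarrow> \<not> sat m a"
  shows "\<forall>A a b. A \<subseteq> L \<longrightarrow> a \<in> L \<longrightarrow> b \<in> L \<longrightarrow>
           Cn M L sat f (A \<union> {conj a b}) = Cn M L sat f (A \<union> {a, b}) \<and>
           Cn M L sat f (A \<union> {a, neg a}) = L \<and>
           (Cn M L sat f (A \<union> {neg a}) = L \<longrightarrow> a \<in> Cn M L sat f A)"
proof (intro allI impI conjI)
  fix A a b assume AL: "A \<subseteq> L" and aL: "a \<in> L" and bL: "b \<in> L"
  have contr: "\<And>X. X \<subseteq> M \<Longrightarrow> f X \<subseteq> X"
  proof -
    have "fC_model M L sat f" using model unfolding restricted_fC_model_def by (rule conjunct1)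
    then have "\<forall>X. X \<subseteq> M \<longrightarrow> f X \<subseteq> X" unfolding fC_model_def by (rule conjunct1)
    then show "\<And>X. X \<subseteq> M \<Longrightarrow> f X \<subseteq> X" by blast
  qed
  have restr: "\<And>X. X \<subseteq> M \<Longrightarrow> f X = {} \<Longrightarrow> X = {}"
    using model unfolding restricted_fC_model_def by simp
  have "mods M sat (A \<union> {conj a b}) = mods M sat (A \<union> {a, b})"
    unfolding mods_def using sat_conj aL bL by auto
  then show "Cn M L sat f (A \<union> {conj a b}) = Cn M L sat f (A \<union> {a, b})"
    unfolding Cn_def by simp
  have "mods M sat (A \<union> {a, neg a}) = {}"
    unfolding mods_def using sat_neg aL by auto
  moreover have "f {} = {}" using contr[of "{}"] by auto
  ultimately show "Cn M L sat f (A \<union> {a, neg a}) = L"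
    unfolding Cn_def theo_def by auto
  assume H: "Cn M L sat f (A \<union> {neg a}) = L"
  let ?Y = "mods M sat (A \<union> {neg a})"
  have YM: "?Y \<subseteq> M" unfolding mods_def by auto
  have "f ?Y = {}"
  proof (rule ccontr)
    assume "f ?Y \<noteq> {}"
    then obtain x where x: "x \<in> f ?Y" by blast
    with contr[OF YM] YM have xM: "x \<in> M" by auto
    have "a \<in> Cn M L sat f (A \<union> {neg a})" "neg a \<in> Cn M L sat f (A \<union> {neg a})"
      using H aL closed_neg by auto
    then have "sat x a" "sat x (neg a)" using x unfolding Cn_def theo_def by auto
    with sat_neg[OF xM aL] show False by simp
  qed
  then have Y0: "?Y = {}" using restr[OF YM] by simp
  have "\<forall>x\<in>mods M sat A. sat x a"
  proof
    fix x assume "x \<in> mods M sat A"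
    then have "x \<in> M" "\<forall>c\<in>A. sat x c" unfolding mods_def by auto
    with Y0 have "\<not> sat x (neg a)" unfolding mods_def by auto
    with sat_neg[OF \<open>x \<in> M\<close> aL] show "sat x a" by simp
  qed
  moreover have "f (mods M sat A) \<subseteq> mods M sat A" by (rule contr) (auto simp: mods_def)
  ultimately show "a \<in> Cn M L sat f A" unfolding Cn_def theo_def using aL by auto
qed

end
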